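(* Let $X$ be a compact metric space, let $f_1,f_2:X\to X$ be continuous, and let $F=\{f_1,f_2\}$. Suppose there is a point $c\in X$ with $f_1(x)=c$ for all $x\in X$ and $f_2(c)=c$. If $F$ has the (Hausdorff metric) shadowing property, then $f_2$ has the shadowing property. Likewise, if $F$ has the (Hausdorff metric) average shadowing property, then $f_2$ has the average shadowing property.
   Context: Throughout, $(X,d)$ is a compact metric space, $\mathbb{N}=\{0,1,2,\dots\}$ and $\mathbb{Z}^+=\{1,2,\dots\}$. $\mathbb{K}(X)$ denotes the set of nonempty compact subsets of $X$, equipped with the Hausdorff metric $d_H(A,B)=\max\{\sup_{a\in A}\inf_{b\in B}d(a,b),\sup_{b\in B}\inf_{a\in A}d(a,b)\}$. A point $x\in X$ is identified with $\{x\}\in\mathbb{K}(X)$. Multiple mappings: for continuous $f_1,f_2:X\to X$, $F=\{f_1,f_2\}$ maps $x\in X$ to $F(x)=\{f_1(x),f_2(x)\}\in\mathbb{K}(X)$. For $n\ge1$, $F^n(x)=\{f_{i_1}f_{i_2}\cdots f_{i_n}(x): i_1,\dots,i_n\in\{1,2\}\}$, and $F^0(x)=\{x\}$. For $A\in\mathbb{K}(X)$, $F^n(A)=\bigcup_{a\in A}F^n(a)\in\mathbb{K}(X)$. Shadowing of $F$: a sequence $\{A_n\}_{n\ge0}\subset\mathbb{K}(X)$ with $A_0$ a singleton is a $\delta$-pseudo orbit of $F$ if $d_H(F(A_n),A_{n+1})\le\delta$ for all $n\in\mathbb{N}$. $F$ has the shadowing property if for every $\epsilon>0$ there is $\delta>0$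 such that for every $\delta$-pseudo orbit $\{A_n\}$ of $F$ there is $y\in X$ with $d_H(F^n(y),A_n)<\epsilon$ for all $n\in\mathbb{N}$. Average shadowing of $F$: a sequence $\{A_n\}_{n\ge0}\subset\mathbb{K}(X)$ with $A_0$ a singleton is a $\delta$-average-pseudo-orbit of $F$ if there is $N(\delta)>0$ such that for all $n\ge N(\delta)$ and all $k\in\mathbb{Z}^+$, $\frac1n\sum_{i=0}^{n-1}d_H(F(A_{i+k}),A_{i+k+1})<\delta$. $F$ has the average shadowing property if for every $\epsilon>0$ there is $\delta>0$ such that for every $\delta$-average-pseudo-orbit $\{A_n\}$ of $F$ there is $y\in X$ with $\limsup_{n\to\infty}\frac1n\sum_{i=0}^{n-1}d_H(F^i(y),A_i)<\epsilon$. For a single continuous map $f:X\to X$: a $\delta$-pseudo orbit is $\{x_n\}_{n\ge0}\subset X$ with $d(f(x_n),x_{n+1})\le\delta$ for all $n$; $f$ has the shadowing property if for every $\epsilon>0$ there is $\delta>0$ such that every $\delta$-pseudo orbit $\{x_n\}$ admits $y\in X$ with $d(f^n(y),x_n)<\epsilon$ for all $n\in\mathbb{N}$. A $\delta$-average-pseudo-orbit of $f$ is $\{x_n\}_{n\ge0}$ such that there is $N(\delta)>0$ with $\frac1n\sum_{i=0}^{n-1}d(f(x_{i+k}),x_{i+k+1})<\delta$ for all $n\ge N(\delta)$, $k\in\mathbb{Z}^+$; $f$ has the average shadowing property if for every $\epsilon>0$ there is $\delta>0$ such that every $\delta$-average-pseudo-orbit $\{x_n\}$ admits $y\in X$ with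 $\limsup_{n\to\infty}\frac1n\sum_{i=0}^{n-1}d(f^i(y),x_i)<\epsilon$. *)

theory Defs
  imports "HOL-Analysis.Analysis"
begin

definition hdist :: "'a::metric_space set \<Rightarrow> 'a set \<Rightarrow> real" where
  "hdist A B = max (SUP a\<in>A. infdist a B) (SUP b\<in>B. infdist b A)"

definition KX :: "'a::metric_space set \<Rightarrow> 'a set set" where
  "KX X = {A. A \<noteq> {} \<and> compact A \<and> A \<subseteq> X}"

definition Fset :: "('a \<Rightarrow> 'a) \<Rightarrow> ('a \<Rightarrow> 'a) \<Rightarrow> 'a set \<Rightarrow> 'a set" where
  "Fset f1 f2 A = (\<Union>a\<in>A. {f1 a, f2 a})"

fun Fpow :: "('a \<Rightarrow> 'a) \<Rightarrow> ('a \<Rightarrow> 'a) \<Rightarrow> nat \<Rightarrow> 'a \<Rightarrow> 'a set" where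
  "Fpow f1 f2 0 x = {x}"
| "Fpow f1 f2 (Suc n) x = Fset f1 f2 (Fpow f1 f2 n x)"

definition F_pseudo_orbit :: "'a::metric_space set \<Rightarrow> ('a \<Rightarrow> 'a) \<Rightarrow> ('a \<Rightarrow> 'a) \<Rightarrow> real \<Rightarrow> (nat \<Rightarrow> 'a set) \<Rightarrow> bool" where
  "F_pseudo_orbit X f1 f2 \<delta> A \<longleftrightarrow>
     (\<forall>n. A n \<in> KX X) \<and> (\<exists>x. A 0 = {x}) \<and>
     (\<forall>n. hdist (Fset f1 f2 (A n)) (A (Suc n)) \<le> \<delta>)"

definition F_shadowing :: "'a::metric_space set \<Rightarrow> ('a \<Rightarrow> 'a) \<Rightarrow> ('a \<Rightarrow> 'a) \<Rightarrow> bool" where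
  "F_shadowing X f1 f2 \<longleftrightarrow>
     (\<forall>\<epsilon>>0. \<exists>\<delta>>0. \<forall>A. F_pseudo_orbit X f1 f2 \<delta> A \<longrightarrow>
        (\<exists>y\<in>X. \<forall>n. hdist (Fpow f1 f2 n y) (A n) < \<epsilon>))"

definition F_avg_pseudo_orbit :: "'a::metric_space set \<Rightarrow> ('a \<Rightarrow> 'a) \<Rightarrow> ('a \<Rightarrow> 'a) \<Rightarrow> real \<Rightarrow> (nat \<Rightarrow> 'a set) \<Rightarrow> bool" where
  "F_avg_pseudo_orbit X f1 f2 \<delta> A \<longleftrightarrow>
     (\<forall>n. A n \<in> KX X) \<and> (\<exists>x. A 0 = {x}) \<and>
     (\<exists>N::nat. N > 0 \<and> (\<forall>n\<ge>N. \<forall>k\<ge>1.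
        (\<Sum>i<n. hdist (Fset f1 f2 (A (i + k))) (A (i + k + 1))) / real n < \<delta>))"

definition F_avg_shadowing :: "'a::metric_space set \<Rightarrow> ('a \<Rightarrow> 'a) \<Rightarrow> ('a \<Rightarrow> 'a) \<Rightarrow> bool" where
  "F_avg_shadowing X f1 f2 \<longleftrightarrow>
     (\<forall>\<epsilon>>0. \<exists>\<delta>>0. \<forall>A. F_avg_pseudo_orbit X f1 f2 \<delta> A \<longrightarrow>
        (\<exists>y\<in>X. limsup (\<lambda>n. ereal ((\<Sum>i<n. hdist (Fpow f1 f2 i y) (A i)) / real n)) < ereal \<epsilon>))"

definition pseudo_orbit :: "'a::metric_space set \<Rightarrow> ('a \<Rightarrow> 'a) \<Rightarrow> real \<Rightarrow> (nat \<Rightarrow> 'a) \<Rightarrow> bool" where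
  "pseudo_orbit X f \<delta> x \<longleftrightarrow> (\<forall>n. x n \<in> X) \<and> (\<forall>n. dist (f (x n)) (x (Suc n)) \<le> \<delta>)"

definition shadowing :: "'a::metric_space set \<Rightarrow> ('a \<Rightarrow> 'a) \<Rightarrow> bool" where
  "shadowing X f \<longleftrightarrow>
     (\<forall>\<epsilon>>0. \<exists>\<delta>>0. \<forall>x. pseudo_orbit X f \<delta> x \<longrightarrow>
        (\<exists>y\<in>X. \<forall>n. dist ((f ^^ n) y) (x n) < \<epsilon>))"

definition avg_pseudo_orbit :: "'a::metric_space set \<Rightarrow> ('a \<Rightarrow> 'a) \<Rightarrow> real \<Rightarrow> (nat \<Rightarrow> 'a) \<Rightarrow> bool" where
  "avg_pseudo_orbit X f \<delta> x \<longleftrightarrow> (\<forall>n. x n \<in> X) \<and>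
     (\<exists>N::nat. N > 0 \<and> (\<forall>n\<ge>N. \<forall>k\<ge>1.
        (\<Sum>i<n. dist (f (x (i + k))) (x (i + k + 1))) / real n < \<delta>))"

definition avg_shadowing :: "'a::metric_space set \<Rightarrow> ('a \<Rightarrow> 'a) \<Rightarrow> bool" where
  "avg_shadowing X f \<longleftrightarrow>
     (\<forall>\<epsilon>>0. \<exists>\<delta>>0. \<forall>x. avg_pseudo_orbit X f \<delta> x \<longrightarrow>
        (\<exists>y\<in>X. limsup (\<lambda>n. ereal ((\<Sum>i<n. dist ((f ^^ i) y) (x i)) / real n)) < ereal \<epsilon>))"

end

theory Submission
  imports Defs
begin

lemma infdist_pair: "infdist x {a, b} = min (dist x a) (dist x b)"
  using infdist_Un_min[of "{a}" "{b}" x] by (simp add: insert_is_Un[of a "{b}"])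
lemma sup_pair: "(SUP u\<in>{p,q}. (g u::real)) = max (g p) (g q)"
  by (simp add: cSup_insert sup_max)
lemma hdist_pair: "hdist {c, a} {c, b} = max (min (dist a c) (dist a b)) (min (dist b c) (dist b a))"
  unfolding hdist_def sup_pair infdist_pair
  by (simp add: max_def min_def)
lemma hdist_pair_le: "hdist {c, a} {c, b} \<le> dist a b"
  unfolding hdist_pair by (simp add: dist_commute)

lemma hdist_pair_ge: "dist a b \<le> 2 * hdist {c, a} {c, b}"
proof -
  let ?H = "hdist {c, a} {c, b}"
  have m1: "min (dist a c) (dist a b) \<le> ?H" and m2: "min (dist b c) (dist b a) \<le> ?H"
    unfolding hdist_pair by simp_all
  have t: "dist a b \<le> dist a c + dist b c" using dist_triangle[of a b c] by (simp add: dist_commute)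
  have "0 \<le> dist a c" "0 \<le> dist b c" by simp_all
  show ?thesis
  proof (cases "dist a b \<le> ?H")
    case True then show ?thesis using m1 by (smt (verit) zero_le_dist)
  next
    case False
    then have "dist a c \<le> ?H" "dist b c \<le> ?H" using m1 m2 by (auto simp: min_def dist_commute split: if_splits)
    then show ?thesis using t by linarith
  qed
qed

lemma hdist_single: "hdist {a} {b} = dist a b"
  unfolding hdist_def by (simp add: dist_commute)
lemma Fpow_form:
  assumes "\<forall>x\<in>X. g x = c" "h c = c" "c \<in> X" "h ` X \<subseteq> X" "y \<in> X"
  shows "Fpow g h (Suc n) y = {c, (h ^^ Suc n) y}"
proof (induction n)
  case 0
  then show ?case using assms by (simp add: Fset_def)
next
  case (Suc n)
  have "(h ^^ n) y \<in> X" by (induction n) (use assms in auto)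
  hence "(h ^^ Suc n) y \<in> X" using assms by auto
  then show ?case using Suc assms by (auto simp add: Fset_def)
qed

lemma key_bound:
  assumes "\<forall>x\<in>X. g x = c" "h c = c" "c \<in> X" "h ` X \<subseteq> X" "y \<in> X"
  shows "dist ((h ^^ n) y) (x n) \<le> 2 * hdist (Fpow g h n y) (if n = 0 then {x 0} else {c, x n})"
proof (cases n)
  case 0
  then show ?thesis by (simp add: hdist_single)
next
  case (Suc m)
  then show ?thesis using Fpow_form[OF assms, of m] hdist_pair_ge by simp
qed

lemma Fset_A:
  assumes "\<forall>x\<in>X. g x = c" "h c = c" "c \<in> X" "\<forall>n. x n \<in> X"
  shows "Fset g h (if n = 0 then {x 0} else {c, x n}) = {c, h (x n)}"
  using assms by (auto simp: Fset_def)

lemma A_step: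
  assumes "\<forall>x\<in>X. g x = c" "h c = c" "c \<in> X" "\<forall>n. x n \<in> X"
  shows "hdist (Fset g h (if n = 0 then {x 0} else {c, x n}))
           (if Suc n = 0 then {x 0} else {c, x (Suc n)}) \<le> dist (h (x n)) (x (Suc n))"
  using Fset_A[where X=X and g=g and h=h and c=c and x=x, OF assms, of n] hdist_pair_le by simp

lemma A_KX:
  assumes "c \<in> X" "\<forall>n. x n \<in> X"
  shows "(if n = 0 then {x 0} else {c, x n}) \<in> KX X"
  using assms by (auto simp: KX_def)

theorem theorem3p2:
  fixes X :: "'a::metric_space set" and f1 f2 :: "'a \<Rightarrow> 'a" and c :: 'a
  assumes "compact X" and "X \<noteq> {}"
    and "continuous_on X f1" and "f1 ` X \<subseteq> X"
    and "continuous_on X f2" and "f2 ` X \<subseteq> X"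
    and "c \<in> X" and "\<forall>x\<in>X. f1 x = c" and "f2 c = c"
  shows "(F_shadowing X f1 f2 \<longrightarrow> shadowing X f2)
       \<and> (F_avg_shadowing X f1 f2 \<longrightarrow> avg_shadowing X f2)"
proof safe
  assume FS: "F_shadowing X f1 f2"
  show "shadowing X f2" unfolding shadowing_def
  proof (intro allI impI)
    fix \<epsilon> :: real assume "\<epsilon> > 0"
    then obtain \<delta> where d: "\<delta> > 0" and H: "\<And>A. F_pseudo_orbit X f1 f2 \<delta> A \<Longrightarrow>
        (\<exists>y\<in>X. \<forall>n. hdist (Fpow f1 f2 n y) (A n) < \<epsilon>/2)"
      using FS unfolding F_shadowing_def by (meson half_gt_zero)
    show "\<exists>\<delta>>0. \<forall>x. pseudo_orbit X f2 \<delta> x \<longrightarrow> (\<exists>y\<in>X. \<forall>n. dist ((f2 ^^ n) y) (x n) < \<epsilon>)"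
    proof (intro exI[of _ \<delta>] conjI allI impI d)
      fix x assume po: "pseudo_orbit X f2 \<delta> x"
      hence xX: "\<forall>n. x n \<in> X" by (simp add: pseudo_orbit_def)
      define A where "A = (\<lambda>n. if n = 0 then {x 0} else {c, x n})"
      have "F_pseudo_orbit X f1 f2 \<delta> A"
        unfolding F_pseudo_orbit_def
      proof (intro conjI allI)
        fix n show "A n \<in> KX X" unfolding A_def using A_KX[OF assms(7) xX] .
      next
        show "\<exists>x'. A 0 = {x'}" by (simp add: A_def)
      next
        fix n
        show "hdist (Fset f1 f2 (A n)) (A (Suc n)) \<le> \<delta>"
          unfolding A_def using A_step[where X=X and g=f1 and h=f2 and c=c and x=x, OF assms(8,9,7) xX, of n] po
          unfolding pseudo_orbit_def by (meson order_trans)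
      qed
      then obtain y where y: "y \<in> X" "\<forall>n. hdist (Fpow f1 f2 n y) (A n) < \<epsilon>/2"
        using H by blast
      show "\<exists>y\<in>X. \<forall>n. dist ((f2 ^^ n) y) (x n) < \<epsilon>"
      proof (intro bexI[OF _ y(1)] allI)
        fix n
        have "dist ((f2 ^^ n) y) (x n) \<le> 2 * hdist (Fpow f1 f2 n y) (A n)"
          unfolding A_def using key_bound[where X=X and g=f1 and h=f2 and c=c, OF assms(8,9,7,6) y(1)] .
        then show "dist ((f2 ^^ n) y) (x n) < \<epsilon>" using y(2)[rule_format, of n] by linarith
      qed
    qed
  qed
next
  assume FS: "F_avg_shadowing X f1 f2"
  show "avg_shadowing X f2" unfolding avg_shadowing_def
  proof (intro allI impI)
    fix \<epsilon> :: real assume "\<epsilon> > 0"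
    then obtain \<delta> where d: "\<delta> > 0" and H: "\<And>A. F_avg_pseudo_orbit X f1 f2 \<delta> A \<Longrightarrow>
        (\<exists>y\<in>X. limsup (\<lambda>n. ereal ((\<Sum>i<n. hdist (Fpow f1 f2 i y) (A i)) / real n)) < ereal (\<epsilon>/2))"
      using FS unfolding F_avg_shadowing_def by (meson half_gt_zero)
    show "\<exists>\<delta>>0. \<forall>x. avg_pseudo_orbit X f2 \<delta> x \<longrightarrow> (\<exists>y\<in>X. limsup (\<lambda>n. ereal ((\<Sum>i<n. dist ((f2 ^^ i) y) (x i)) / real n)) < ereal \<epsilon>)"
    proof (intro exI[of _ \<delta>] conjI allI impI d)
      fix x assume po: "avg_pseudo_orbit X f2 \<delta> x"
      hence xX: "\<forall>n. x n \<in> X" by (simp add: avg_pseudo_orbit_def)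
      obtain N :: nat where N: "N > 0" "\<forall>n\<ge>N. \<forall>k\<ge>1.
        (\<Sum>i<n. dist (f2 (x (i + k))) (x (i + k + 1))) / real n < \<delta>"
        using po unfolding avg_pseudo_orbit_def by blast
      define A where "A = (\<lambda>n. if n = 0 then {x 0} else {c, x n})"
      have "F_avg_pseudo_orbit X f1 f2 \<delta> A"
        unfolding F_avg_pseudo_orbit_def
      proof (intro conjI allI exI[of _ N] N(1) impI)
        fix n show "A n \<in> KX X" unfolding A_def using A_KX[OF assms(7) xX] .
      next
        show "\<exists>x'. A 0 = {x'}" by (simp add: A_def)
      next
        fix n k :: nat assume n: "N \<le> n" and k: "1 \<le> k"
        have "(\<Sum>i<n. hdist (Fset f1 f2 (A (i + k))) (A (i + k + 1)))
              \<le> (\<Sum>i<n. dist (f2 (x (i + k))) (x (i + k + 1)))"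
        proof (rule sum_mono)
          fix i
          show "hdist (Fset f1 f2 (A (i + k))) (A (i + k + 1)) \<le> dist (f2 (x (i + k))) (x (i + k + 1))"
            using A_step[where X=X and g=f1 and h=f2 and c=c and x=x, OF assms(8,9,7) xX, of "i+k"]
            unfolding A_def by simp
        qed
        hence "(\<Sum>i<n. hdist (Fset f1 f2 (A (i + k))) (A (i + k + 1))) / real n
              \<le> (\<Sum>i<n. dist (f2 (x (i + k))) (x (i + k + 1))) / real n"
          by (simp add: divide_right_mono)
        then show "(\<Sum>i<n. hdist (Fset f1 f2 (A (i + k))) (A (i + k + 1))) / real n < \<delta>"
          using N(2) n k by fastforce
      qed
      then obtain y where y: "y \<in> X" and
        L: "limsup (\<lambda>n. ereal ((\<Sum>i<n. hdist (Fpow f1 f2 i y) (A i)) / real n)) < ereal (\<epsilon>/2)"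
        using H by blast
      have le: "ereal ((\<Sum>i<n. dist ((f2 ^^ i) y) (x i)) / real n)
            \<le> ereal 2 * ereal ((\<Sum>i<n. hdist (Fpow f1 f2 i y) (A i)) / real n)" for n
      proof -
        have "(\<Sum>i<n. dist ((f2 ^^ i) y) (x i)) \<le> (\<Sum>i<n. 2 * hdist (Fpow f1 f2 i y) (A i))"
          apply (rule sum_mono) unfolding A_def using key_bound[where X=X and g=f1 and h=f2 and c=c, OF assms(8,9,7,6) y] .
        hence "(\<Sum>i<n. dist ((f2 ^^ i) y) (x i)) / real n
             \<le> 2 * ((\<Sum>i<n. hdist (Fpow f1 f2 i y) (A i)) / real n)"
          by (simp add: sum_distrib_left[symmetric] divide_right_mono)
        thus ?thesis by simp
      qed
      have "limsup (\<lambda>n. ereal ((\<Sum>i<n. dist ((f2 ^^ i) y) (x i)) / real n))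
          \<le> limsup (\<lambda>n. ereal 2 * ereal ((\<Sum>i<n. hdist (Fpow f1 f2 i y) (A i)) / real n))"
        by (rule Limsup_mono) (use le in auto)
      also have "\<dots> = ereal 2 * limsup (\<lambda>n. ereal ((\<Sum>i<n. hdist (Fpow f1 f2 i y) (A i)) / real n))"
        by (rule limsup_ereal_mult_left) simp
      also have "\<dots> < ereal \<epsilon>"
        using L by (cases "limsup (\<lambda>n. ereal ((\<Sum>i<n. hdist (Fpow f1 f2 i y) (A i)) / real n))") auto
      finally show "\<exists>y\<in>X. limsup (\<lambda>n. ereal ((\<Sum>i<n. dist ((f2 ^^ i) y) (x i)) / real n)) < ereal \<epsilon>"
        using y by blast
    qed
  qed
qed

end
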